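(* Fix an integer $\ell\ge1$. For real $k\ge 0$ let $F_k(p)=(1-p)^{-k}\sum_{j=1}^{\ell}\binom{\ell}{j}\frac{1}{1-(1-2p)^j}$ for $p\in(0,1)$. Then, as $k\to\infty$, \[ \min_{p\in(0,1)}F_k(p)=(1+o(1))\,2^\ell e\,(bk+a), \] and also $\min_{x>0}e^x\left(\frac{bk}{x}+a\right)=(1+o(1))\,e\,(bk+a)$.
   Context: $s(\ell)=\sum_{j=1}^\ell\binom{\ell}{j}\frac1j$, $a=\frac12-\frac{1+s(\ell)}{2^{\ell+1}}$, $b=\frac{s(\ell)}{2^{\ell+1}}$. For $k=m\ell$, $F_k(p)$ is the expected number of iterations of the (1+1) EA with mutation rate $p$ on BlockLeadingOnes with block length $\ell$ to go from the first moment the fitness equals $m$ to the first moment it exceeds $m$ (this may be $0$). *)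

theory Defs
  imports "HOL-Analysis.Analysis" "HOL-Library.Landau_Symbols"
begin

definition s_BLO :: "nat \<Rightarrow> real" where
  "s_BLO l = (\<Sum>j=1..l. real (l choose j) / real j)"

definition a_BLO :: "nat \<Rightarrow> real" where
  "a_BLO l = 1/2 - (1 + s_BLO l) / 2 ^ (l + 1)"

definition b_BLO :: "nat \<Rightarrow> real" where
  "b_BLO l = s_BLO l / 2 ^ (l + 1)"

definition F_BLO :: "nat \<Rightarrow> real \<Rightarrow> real \<Rightarrow> real" where
  "F_BLO l k p = (1 - p) powr (- k) * (\<Sum>j=1..l. real (l choose j) / (1 - (1 - 2*p) ^ j))"

end

theory Submission imports Defs "HOL-Real_Asymp.Real_Asymp" begin

lemma exp_ge_e_mult: "exp 1 * (x::real) \<le> exp x"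
proof -
  have "x \<le> exp (x - 1)" using exp_ge_add_one_self[of "x-1"] by simp
  then have "exp 1 * x \<le> exp 1 * exp (x - 1)" by simp
  also have "\<dots> = exp x" by (simp add: exp_diff)
  finally show ?thesis .
qed

lemma one_minus_pow_le:
  fixes y :: real assumes "\<bar>y\<bar> \<le> 1" "y \<le> 1"
  shows "1 - y ^ j \<le> real j * (1 - y)"
proof (induction j)
  case 0 then show ?case by simp
next
  case (Suc j)
  have "y ^ j \<le> 1"
  proof -
    have "y ^ j \<le> \<bar>y\<bar> ^ j" by (metis abs_ge_self power_abs)
    also have "\<dots> \<le> 1" using assms by (simp add: power_le_one)
    finally show ?thesis .
  qed
  then have "y^j * (1 - y) \<le> 1 - y" using assms mult_right_mono[of "y^j" 1 "1-y"] by simp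
  then show ?case using Suc by (simp add: algebra_simps)
qed

lemma s_pos: "l \<ge> 1 \<Longrightarrow> s_BLO l > 0"
proof -
  assume "l \<ge> 1"
  have "s_BLO l \<ge> real (l choose 1) / real 1"
    unfolding s_BLO_def using \<open>l \<ge> 1\<close>
    by (intro member_le_sum) auto
  then show ?thesis using \<open>l \<ge> 1\<close> by simp
qed

lemma F_lower:
  assumes "p > 0" "p < 1" "k \<ge> 0"
  shows "exp 1 * s_BLO l / 2 * k \<le> F_BLO l k p"
proof -
  have sum_ge: "s_BLO l / (2*p) \<le> (\<Sum>j=1..l. real (l choose j) / (1 - (1 - 2*p) ^ j))"
    unfolding s_BLO_def sum_divide_distrib
  proof (rule sum_mono)
    fix j assume j: "j \<in> {1..l}"
    let ?y = "1 - 2*p"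
    have ay: "\<bar>?y\<bar> < 1" using assms by auto
    have "\<bar>?y ^ j\<bar> < 1" proof -
      have "\<bar>?y\<bar> ^ j < 1" using ay j by (subst power_less_one_iff) auto
      then show ?thesis by (simp add: power_abs)
    qed
    then have pos: "0 < 1 - ?y ^ j" by auto
    have le: "1 - ?y ^ j \<le> real j * (2*p)" using one_minus_pow_le[of ?y j] ay by simp
    have "real (l choose j) / real j / (2*p) = real (l choose j) / (real j * (2*p))" by simp
    also have "\<dots> \<le> real (l choose j) / (1 - ?y ^ j)"
      by (rule divide_left_mono) (use pos le j assms in auto)
    finally show "real (l choose j) / real j / (2*p) \<le> real (l choose j) / (1 - ?y ^ j)" .
  qed
  have pw: "exp (k*p) \<le> (1 - p) powr (-k)"
  proof -
    have "ln (1-p) \<le> -p" using ln_le_minus_one[of "1-p"] assms by simp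
    then have "k*p \<le> -k * ln (1-p)" using assms mult_left_mono[of "ln (1-p)" "-p" k] by simp
    then show ?thesis using assms by (simp add: powr_def)
  qed
  have s0: "s_BLO l \<ge> 0" unfolding s_BLO_def by (intro sum_nonneg) auto
  have "exp 1 * s_BLO l / 2 * k = (exp 1 * (k*p)) * (s_BLO l / (2*p))" using assms by (simp add: field_simps)
  also have "\<dots> \<le> exp (k*p) * (s_BLO l / (2*p))"
    by (rule mult_right_mono[OF exp_ge_e_mult]) (use s0 assms in auto)
  also have "\<dots> \<le> (1 - p) powr (-k) * (\<Sum>j=1..l. real (l choose j) / (1 - (1 - 2*p) ^ j))"
    by (rule mult_mono[OF pw sum_ge]) (use s0 assms in auto)
  finally show ?thesis unfolding F_BLO_def .
qed


lemma term_upper: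
  fixes q :: real assumes q: "0 < q" "q \<le> 1" and j: "j \<ge> 1"
  shows "1 / (1 - (1 - q) ^ j) \<le> 1 / (real j * q) + 1"
proof -
  have b: "1 + real j * q \<le> (1 + q) ^ j" using Bernoulli_inequality[of q j] q by simp
  have c: "(1 - q) ^ j * (1 + q) ^ j \<le> 1"
  proof -
    have "(1 - q) ^ j * (1 + q) ^ j = (1 - q^2) ^ j" by (simp add: power_mult_distrib[symmetric] power2_eq_square algebra_simps)
    also have "\<dots> \<le> 1" using q by (intro power_le_one) (auto simp: power2_eq_square mult_le_one)
    finally show ?thesis .
  qed
  have y0: "(1 - q) ^ j \<ge> 0" using q by simp
  have d: "(1 - q) ^ j * (1 + real j * q) \<le> 1"
    using mult_left_mono[OF b y0] c by simp
  have jq: "real j * q > 0" using q j by simp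
  have e: "real j * q / (1 + real j * q) \<le> 1 - (1 - q) ^ j"
    using d jq by (simp add: field_simps)
  have pos: "real j * q / (1 + real j * q) > 0" using jq by simp
  have pos2: "1 - (1 - q) ^ j > 0" using pos e by linarith
  have "1 / (1 - (1 - q) ^ j) \<le> 1 / (real j * q / (1 + real j * q))"
    by (rule divide_left_mono[OF e], simp, rule mult_pos_pos[OF pos2 pos])
  also have "\<dots> = 1 / (real j * q) + 1" using jq q j by (simp add: field_simps)
  finally show ?thesis .
qed

lemma sum_upper:
  assumes "0 < p" "p \<le> 1/2"
  shows "(\<Sum>j=1..l. real (l choose j) / (1 - (1 - 2*p) ^ j)) \<le> s_BLO l / (2*p) + 2 ^ l"
proof -
  have "(\<Sum>j=1..l. real (l choose j) / (1 - (1 - 2*p) ^ j))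
     \<le> (\<Sum>j=1..l. real (l choose j) / real j / (2*p) + real (l choose j))"
  proof (rule sum_mono)
    fix j assume j: "j \<in> {1..l}"
    have "real (l choose j) / (1 - (1 - 2*p) ^ j) = real (l choose j) * (1 / (1 - (1 - 2*p) ^ j))" by simp
    also have "\<dots> \<le> real (l choose j) * (1 / (real j * (2*p)) + 1)"
      by (rule mult_left_mono[OF term_upper]) (use assms j in auto)
    also have "\<dots> = real (l choose j) / real j / (2*p) + real (l choose j)" by (simp add: field_simps)
    finally show "real (l choose j) / (1 - (1 - 2*p) ^ j) \<le> real (l choose j) / real j / (2*p) + real (l choose j)" .
  qed
  also have "\<dots> = s_BLO l / (2*p) + (\<Sum>j=1..l. real (l choose j))"
    unfolding s_BLO_def by (simp add: sum.distrib sum_divide_distrib)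
  also have "(\<Sum>j=1..l. real (l choose j)) \<le> (\<Sum>j\<le>l. real (l choose j))"
    by (rule sum_mono2) auto
  also have "(\<Sum>j\<le>l. real (l choose j)) = 2 ^ l"
    using choose_row_sum[of l] by (metis of_nat_numeral of_nat_power of_nat_sum)
  finally show ?thesis by simp
qed


lemma s_le: "s_BLO l \<le> 2 ^ l - 1"
proof -
  have "s_BLO l \<le> (\<Sum>j=1..l. real (l choose j))"
    unfolding s_BLO_def by (intro sum_mono) (auto simp: divide_le_eq)
  also have "(\<Sum>j\<le>l. real (l choose j)) = 2 ^ l"
    using choose_row_sum[of l] by (metis of_nat_numeral of_nat_power of_nat_sum)
  moreover have "(\<Sum>j\<le>l. real (l choose j)) = 1 + (\<Sum>j=1..l. real (l choose j))"
  proof -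
    have "{..l} = insert 0 {1..l}" by auto
    then show ?thesis by simp
  qed
  ultimately show ?thesis by simp
qed

lemma a_nonneg: "a_BLO l \<ge> 0"
proof -
  have "1 + s_BLO l \<le> 2 ^ l" using s_le[of l] by simp
  then have "(1 + s_BLO l) / 2 ^ (l+1) \<le> 2 ^ l / 2 ^ (l+1)" by (intro divide_right_mono) auto
  also have "\<dots> = 1/2" by simp
  finally show ?thesis unfolding a_BLO_def by simp
qed

lemma inv_lim: "((\<lambda>k::real. c / k) \<longlongrightarrow> 0) at_top"
  by real_asymp

theorem mainTheorem17:
  fixes l :: nat
  assumes "l \<ge> 1"
  shows "((\<lambda>k::real. INF p\<in>{0<..<1::real}. F_BLO l k p)
           \<sim>[at_top] (\<lambda>k. 2 ^ l * exp 1 * (b_BLO l * k + a_BLO l))) \<and>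
         ((\<lambda>k::real. INF x\<in>{(0::real)<..}. exp x * (b_BLO l * k / x + a_BLO l))
           \<sim>[at_top] (\<lambda>k. exp 1 * (b_BLO l * k + a_BLO l)))"
proof
  define S where "S = s_BLO l"
  define a where "a = a_BLO l"
  define b where "b = b_BLO l"
  have Sp: "S > 0" unfolding S_def using s_pos[OF assms] .
  have bS: "b = S / 2 ^ (l+1)" unfolding b_def S_def b_BLO_def ..
  have bp: "b > 0" using Sp bS by simp
  have b2: "2 ^ l * b = S / 2" using bS by simp
  have a0: "a \<ge> 0" unfolding a_def by (rule a_nonneg)
  have ev2: "eventually (\<lambda>k::real. k \<ge> 2) at_top" by (rule eventually_ge_at_top)
  {
    define G where "G k = (INF p\<in>{0<..<1::real}. F_BLO l k p)" for k
    define g where "g k = 2 ^ l * exp 1 * (b * k + a)" for k :: real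
    have low: "exp 1 * S / 2 * k \<le> G k" if "k \<ge> 0" for k
      unfolding G_def S_def by (rule cINF_greatest) (use F_lower that in auto)
    have up: "G k \<le> (1 - 1/k) powr (-k) * (S/2 * k + 2 ^ l)" if k: "k \<ge> 2" for k
    proof -
      have bdd: "bdd_below ((\<lambda>p. F_BLO l k p) ` {0<..<1})"
        by (rule bdd_belowI[of _ "exp 1 * S / 2 * k"]) (use F_lower k in \<open>auto simp: S_def\<close>)
      have "G k \<le> F_BLO l k (1/k)" unfolding G_def by (rule cINF_lower[OF bdd]) (use k in auto)
      also have "\<dots> \<le> (1 - 1/k) powr (-k) * (S / (2*(1/k)) + 2 ^ l)"
        unfolding F_BLO_def S_def by (rule mult_left_mono[OF sum_upper]) (use k in auto)
      also have "S / (2*(1/k)) = S/2 * k" by simp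
      finally show ?thesis .
    qed
    have gpos: "eventually (\<lambda>k. g k > 0) at_top"
      using eventually_gt_at_top[of "0::real"] proof eventually_elim
      case (elim k) then show ?case unfolding g_def using bp a0 by (intro mult_pos_pos) (auto intro: add_pos_nonneg)
    qed
    have lim1: "((\<lambda>k. (exp 1 * S / 2 * k) / g k) \<longlongrightarrow> 1) at_top"
    proof -
      have "((\<lambda>k. (exp 1 * S / 2) / (2 ^ l * exp 1 * (b + a / k))) \<longlongrightarrow> (exp 1 * S / 2) / (2 ^ l * exp 1 * (b + 0))) at_top"
        by (intro tendsto_intros inv_lim) (use bp in auto)
      also have "(exp 1 * S / 2) / (2 ^ l * exp 1 * (b + 0)) = 1" using b2 Sp by (simp add: field_simps)
      finally show ?thesis
        by (rule Lim_transform_eventually)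
           (use eventually_gt_at_top[of "0::real"] in \<open>eventually_elim, simp add: g_def field_simps\<close>)
    qed
    have lim2: "((\<lambda>k. (1 - 1/k) powr (-k) * (S/2 * k + 2 ^ l) / g k) \<longlongrightarrow> 1) at_top"
    proof -
      have e: "((\<lambda>k::real. (1-1/k) powr (-k)) \<longlongrightarrow> exp 1) at_top" by real_asymp
      have "((\<lambda>k. (1 - 1/k) powr (-k) * (S/2 + 2 ^ l / k) / (2 ^ l * exp 1 * (b + a / k))) \<longlongrightarrow> exp 1 * (S/2 + 0) / (2 ^ l * exp 1 * (b + 0))) at_top"
        by (intro tendsto_intros inv_lim e) (use bp in auto)
      also have "exp 1 * (S/2 + 0) / (2 ^ l * exp 1 * (b + 0)) = 1" using b2 Sp by (simp add: field_simps)
      finally show ?thesis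
      proof (rule Lim_transform_eventually)
        show "\<forall>\<^sub>F k in at_top. (1 - 1/k) powr (-k) * (S/2 + 2 ^ l / k) / (2 ^ l * exp 1 * (b + a / k)) =
             (1 - 1/k) powr (-k) * (S/2 * k + 2 ^ l) / g k"
          using eventually_gt_at_top[of "0::real"]
        proof eventually_elim
          case (elim k)
          have 1: "S/2 * k + 2 ^ l = k * (S/2 + 2 ^ l / k)" using elim by (simp add: field_simps)
          have 2: "g k = k * (2 ^ l * exp 1 * (b + a / k))" using elim by (simp add: g_def field_simps)
          show ?case unfolding 1 2 using elim by simp
        qed
      qed
    qed
    have "((\<lambda>k. G k / g k) \<longlongrightarrow> 1) at_top"
    proof (rule tendsto_sandwich[OF _ _ lim1 lim2])
      show "eventually (\<lambda>k. exp 1 * S / 2 * k / g k \<le> G k / g k) at_top"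
        using gpos ev2 by eventually_elim (intro divide_right_mono low, auto)
      show "eventually (\<lambda>k. G k / g k \<le> (1 - 1/k) powr (-k) * (S/2 * k + 2 ^ l) / g k) at_top"
        using gpos ev2 by eventually_elim (intro divide_right_mono up, auto)
    qed
    then show "((\<lambda>k::real. INF p\<in>{0<..<1::real}. F_BLO l k p)
           \<sim>[at_top] (\<lambda>k. 2 ^ l * exp 1 * (b_BLO l * k + a_BLO l)))"
      unfolding G_def g_def a_def b_def by (rule asymp_equivI')
  }
  {
    define H where "H k = (INF x\<in>{(0::real)<..}. exp x * (b * k / x + a))" for k
    define g where "g k = exp 1 * (b * k + a)" for k :: real
    have lowp: "exp 1 * b * k \<le> exp x * (b * k / x + a)" if "k \<ge> 0" "x > 0" for k x
    proof -
      have "exp 1 * b * k = (exp 1 * x) * (b * k / x)" using that by simp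
      also have "\<dots> \<le> exp x * (b * k / x)"
        by (rule mult_right_mono[OF exp_ge_e_mult]) (use that bp in auto)
      also have "\<dots> \<le> exp x * (b * k / x + a)" using a0 by (intro mult_left_mono) auto
      finally show ?thesis .
    qed
    have low: "exp 1 * b * k \<le> H k" if "k \<ge> 0" for k
      unfolding H_def by (rule cINF_greatest) (use lowp that in auto)
    have up: "H k \<le> g k" if "k \<ge> 0" for k
    proof -
      have bdd: "bdd_below ((\<lambda>x. exp x * (b * k / x + a)) ` {0<..})"
        by (rule bdd_belowI[of _ "exp 1 * b * k"]) (use lowp that in auto)
      have "H k \<le> exp 1 * (b * k / 1 + a)" unfolding H_def by (rule cINF_lower[OF bdd]) auto
      then show ?thesis unfolding g_def by simp
    qed
    have gpos: "eventually (\<lambda>k. g k > 0) at_top"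
      using eventually_gt_at_top[of "0::real"] proof eventually_elim
      case (elim k) then show ?case unfolding g_def using bp a0 by (intro mult_pos_pos) (auto intro: add_pos_nonneg)
    qed
    have lim1: "((\<lambda>k. (exp 1 * b * k) / g k) \<longlongrightarrow> 1) at_top"
    proof -
      have "((\<lambda>k. b / (b + a / k)) \<longlongrightarrow> b / (b + 0)) at_top"
        by (intro tendsto_intros inv_lim) (use bp in auto)
      also have "b / (b + 0) = 1" using bp by simp
      finally show ?thesis
      proof (rule Lim_transform_eventually)
        show "\<forall>\<^sub>F k in at_top. b / (b + a / k) = exp 1 * b * k / g k"
          using eventually_gt_at_top[of "0::real"]
        proof eventually_elim
          case (elim k)
          have "b * k + a > 0" using elim bp a0 by (intro add_pos_nonneg) auto
          have 1: "b / (b + a / k) = b * k / (b * k + a)" using elim by (simp add: field_simps)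
          have 2: "exp 1 * b * k / g k = b * k / (b * k + a)" unfolding g_def by simp
          show ?case unfolding 1 2 ..
        qed
      qed
    qed
    have lim2: "((\<lambda>k. g k / g k) \<longlongrightarrow> 1) at_top"
      by (rule Lim_transform_eventually[OF tendsto_const]) (use gpos in \<open>eventually_elim, simp\<close>)
    have "((\<lambda>k. H k / g k) \<longlongrightarrow> 1) at_top"
    proof (rule tendsto_sandwich[OF _ _ lim1 lim2])
      show "eventually (\<lambda>k. exp 1 * b * k / g k \<le> H k / g k) at_top"
        using gpos ev2 by eventually_elim (intro divide_right_mono low, auto)
      show "eventually (\<lambda>k. H k / g k \<le> g k / g k) at_top"
        using gpos ev2 by eventually_elim (intro divide_right_mono up, auto)
    qed
    then show "((\<lambda>k::real. INF x\<in>{(0::real)<..}. exp x * (b_BLO l * k / x + a_BLO l))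
           \<sim>[at_top] (\<lambda>k. exp 1 * (b_BLO l * k + a_BLO l)))"
      unfolding H_def g_def a_def b_def by (rule asymp_equivI')
  }
qed

end
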